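(* Let $n\ge3$ and for $i\in\mathbb Z/n\mathbb Z$ let $e_i=x_{i,i+1}\in\mathcal E_n$, where the vertices are labeled $0,1,\dots,n-1$ modulo $n$. Then in $\mathcal E_n$: $$R_1:=\sum_{i=0}^{n-1}e_{i-1}e_{i-2}\cdots e_{1}e_0\,e_{n-1}e_{n-2}\cdots e_{i+1}=0,\qquad R_{n-1}:=\sum_{i=0}^{n-1}e_{i+1}e_{i+2}\cdots e_{n-1}\,e_0e_1\cdots e_{i-1}=0,$$ where the $i$-th summand of $R_1$ is the product of all $e_j$ with $j\ne i$ in cyclically decreasing order of index starting from $e_{i-1}$ and ending with $e_{i+1}$, and the $i$-th summand of $R_{n-1}$ is the product of all $e_j$ with $j\neq i$ in cyclically increasing order starting from $e_{i+1}$ and ending with $e_{i-1}$.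
   Context: Let $n\ge 1$. The Fomin–Kirillov algebra $\mathcal E_n$ is the associative $\mathbb Q$-algebra with generators $x_{ij}$ for ordered pairs of distinct $i,j$ in an $n$-element index set (here $\{0,1,\dots,n-1\}$), subject to $x_{ij}=-x_{ji}$, $x_{ij}^2=0$, $x_{ij}x_{kl}=x_{kl}x_{ij}$ for distinct $i,j,k,l$, and $x_{ij}x_{jk}+x_{jk}x_{ki}+x_{ki}x_{ij}=0$ for distinct $i,j,k$. *)

theory Defs
  imports Complex_Main
begin

text \<open>Generators are pairs (i,j); a word is a list of generators; an element of the
  free algebra is a finitely supported function from words to rat (the
  coefficient of each word).  The Fomin-Kirillov algebra E_n is the quotient by
  the two-sided ideal FK_ideal n; an element is zero in E_n iff it lies in it.\<close>

type_synonym gen = "nat \<times> nat"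
type_synonym word = "gen list"
type_synonym ncpoly = "word \<Rightarrow> rat"

definition gens :: "nat \<Rightarrow> gen set" where
  "gens n = {(i, j). i < n \<and> j < n \<and> i \<noteq> j}"

definition monom :: "word \<Rightarrow> ncpoly" where
  "monom w = (\<lambda>v. if v = w then 1 else 0)"

definition padd :: "ncpoly \<Rightarrow> ncpoly \<Rightarrow> ncpoly" where
  "padd f g = (\<lambda>v. f v + g v)"

definition psmult :: "rat \<Rightarrow> ncpoly \<Rightarrow> ncpoly" where
  "psmult c f = (\<lambda>v. c * f v)"

definition lmul :: "word \<Rightarrow> ncpoly \<Rightarrow> ncpoly" where
  "lmul u f = (\<lambda>v. if take (length u) v = u then f (drop (length u) v) else 0)"

definition rmul :: "ncpoly \<Rightarrow> word \<Rightarrow> ncpoly" where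
  "rmul f u = (\<lambda>v. if length u \<le> length v \<and> drop (length v - length u) v = u
                    then f (take (length v - length u) v) else 0)"

definition FK_relations :: "nat \<Rightarrow> ncpoly set" where
  "FK_relations n =
     {padd (monom [(i, j)]) (monom [(j, i)]) | i j. (i, j) \<in> gens n}
   \<union> {monom [(i, j), (i, j)] | i j. (i, j) \<in> gens n}
   \<union> {padd (monom [(i, j), (k, l)]) (psmult (-1) (monom [(k, l), (i, j)])) | i j k l.
        i < n \<and> j < n \<and> k < n \<and> l < n \<and> distinct [i, j, k, l]}
   \<union> {padd (padd (monom [(i, j), (j, k)]) (monom [(j, k), (k, i)])) (monom [(k, i), (i, j)])
        | i j k. i < n \<and> j < n \<and> k < n \<and> distinct [i, j, k]}"

inductive_set FK_ideal :: "nat \<Rightarrow> ncpoly set" for n where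
  rel: "r \<in> FK_relations n \<Longrightarrow> r \<in> FK_ideal n"
| zero: "(\<lambda>_. 0) \<in> FK_ideal n"
| add: "f \<in> FK_ideal n \<Longrightarrow> g \<in> FK_ideal n \<Longrightarrow> padd f g \<in> FK_ideal n"
| smult: "f \<in> FK_ideal n \<Longrightarrow> psmult c f \<in> FK_ideal n"
| lmul: "f \<in> FK_ideal n \<Longrightarrow> set u \<subseteq> gens n \<Longrightarrow> lmul u f \<in> FK_ideal n"
| rmul: "f \<in> FK_ideal n \<Longrightarrow> set u \<subseteq> gens n \<Longrightarrow> rmul f u \<in> FK_ideal n"

definition FK_zero :: "nat \<Rightarrow> ncpoly \<Rightarrow> bool" where
  "FK_zero n f \<longleftrightarrow> f \<in> FK_ideal n"

definition edge :: "nat \<Rightarrow> nat \<Rightarrow> gen" where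
  "edge n j = (j mod n, (j + 1) mod n)"

text \<open>i-th summand word of R_1: e_{i-1} e_{i-2} ... e_{i+1} (n-1 letters).\<close>
definition R1_word :: "nat \<Rightarrow> nat \<Rightarrow> word" where
  "R1_word n i = map (\<lambda>k. edge n (i + n - 1 - k)) [0..<n - 1]"

definition Rn1_word :: "nat \<Rightarrow> nat \<Rightarrow> word" where
  "Rn1_word n i = map (\<lambda>k. edge n (i + 1 + k)) [0..<n - 1]"

definition R1 :: "nat \<Rightarrow> ncpoly" where
  "R1 n = (\<lambda>v. \<Sum>i<n. monom (R1_word n i) v)"

definition Rn1 :: "nat \<Rightarrow> ncpoly" where
  "Rn1 n = (\<lambda>v. \<Sum>i<n. monom (Rn1_word n i) v)"

end

theory Submission
  imports Defs "HOL-Library.Function_Algebras"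
begin

lemma sum_fun_apply: "finite A \<Longrightarrow> (sum f A) x = sum (\<lambda>i. f i x) A"
  by (induction A rule: finite_induct) auto

lemma I_add: "f \<in> FK_ideal n \<Longrightarrow> g \<in> FK_ideal n \<Longrightarrow> f + g \<in> FK_ideal n"
  using FK_ideal.add[of f n g] by (simp add: padd_def plus_fun_def)

lemma I_neg: "f \<in> FK_ideal n \<Longrightarrow> - f \<in> FK_ideal n"
proof -
  assume "f \<in> FK_ideal n"
  then have "psmult (-1) f \<in> FK_ideal n" by (rule FK_ideal.smult)
  moreover have "psmult (-1) f = - f" by (auto simp: psmult_def)
  ultimately show ?thesis by simp
qed

lemma I_diff: "f \<in> FK_ideal n \<Longrightarrow> g \<in> FK_ideal n \<Longrightarrow> f - g \<in> FK_ideal n"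
  using I_add[of f n "-g"] I_neg[of g n] by simp

lemma I_zero: "0 \<in> FK_ideal n"
  using FK_ideal.zero by (simp add: zero_fun_def)

lemma I_sum: "finite A \<Longrightarrow> (\<And>i. i \<in> A \<Longrightarrow> f i \<in> FK_ideal n) \<Longrightarrow> sum f A \<in> FK_ideal n"
  by (induction A rule: finite_induct) (auto intro: I_add I_zero)

lemma lmul_add: "lmul u (f + g) = lmul u f + lmul u g"
  by (auto simp: lmul_def)
lemma rmul_add: "rmul (f + g) u = rmul f u + rmul g u"
  by (auto simp: rmul_def)
lemma lmul_diff: "lmul u (f - g) = lmul u f - lmul u g"
  by (auto simp: lmul_def)
lemma rmul_diff: "rmul (f - g) u = rmul f u - rmul g u"
  by (auto simp: rmul_def)
lemma lmul_neg: "lmul u (- g) = - lmul u g"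
  by (auto simp: lmul_def)
lemma rmul_neg: "rmul (- g) u = - rmul g u"
  by (auto simp: rmul_def)
lemma lmul_zero: "lmul u 0 = 0" by (auto simp: lmul_def)
lemma rmul_zero: "rmul 0 u = 0" by (auto simp: rmul_def)
lemma lmul_sum: "finite A \<Longrightarrow> lmul u (sum f A) = sum (\<lambda>i. lmul u (f i)) A"
proof (induction A rule: finite_induct)
  case empty then show ?case by (simp only: sum.empty lmul_zero)
next
  case (insert x F)
  then show ?case by (simp only: sum.insert[OF insert(1,2)] lmul_add)
qed
lemma rmul_sum: "finite A \<Longrightarrow> rmul (sum f A) u = sum (\<lambda>i. rmul (f i) u) A"
proof (induction A rule: finite_induct)
  case empty then show ?case by (simp only: sum.empty rmul_zero)
next
  case (insert x F)
  then show ?case by (simp only: sum.insert[OF insert(1,2)] rmul_add)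
qed

lemma lmul_monom: "lmul u (monom w) = monom (u @ w)"
proof
  fix v
  show "lmul u (monom w) v = monom (u @ w) v"
    unfolding lmul_def monom_def
    by (metis append_eq_conv_conj)
qed

lemma rmul_monom: "rmul (monom w) u = monom (w @ u)"
proof
  fix v
  show "rmul (monom w) u v = monom (w @ u) v"
    unfolding rmul_def monom_def
    by (cases "v = w @ u") (auto, metis append_take_drop_id)
qed

lemma I_ctx: "r \<in> FK_ideal n \<Longrightarrow> set P \<subseteq> gens n \<Longrightarrow> set Q \<subseteq> gens n
   \<Longrightarrow> lmul P (rmul r Q) \<in> FK_ideal n"
  by (intro FK_ideal.lmul FK_ideal.rmul)

definition eqv :: "nat \<Rightarrow> ncpoly \<Rightarrow> ncpoly \<Rightarrow> bool" where
  "eqv n f g \<longleftrightarrow> f - g \<in> FK_ideal n"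

lemma eqv_refl: "eqv n f f" by (simp add: eqv_def I_zero)
lemma eqv_sym: "eqv n f g \<Longrightarrow> eqv n g f"
  unfolding eqv_def using I_neg by fastforce
lemma eqv_trans[trans]: "eqv n f g \<Longrightarrow> eqv n g h \<Longrightarrow> eqv n f h"
  unfolding eqv_def using I_add by fastforce
lemma eqv_add: "eqv n f g \<Longrightarrow> eqv n f' g' \<Longrightarrow> eqv n (f + f') (g + g')"
  unfolding eqv_def using I_add by (metis add_diff_add)
lemma eqv_neg: "eqv n f g \<Longrightarrow> eqv n (- f) (- g)"
  unfolding eqv_def using I_neg by (metis minus_diff_eq minus_diff_minus)
lemma eqv_diff: "eqv n f g \<Longrightarrow> eqv n f' g' \<Longrightarrow> eqv n (f - f') (g - g')"
  using eqv_add[of n f g "-f'" "-g'"] eqv_neg by simp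

lemma monom_ctx: "lmul P (rmul (monom w) Q) = monom (P @ w @ Q)"
  by (simp add: rmul_monom lmul_monom)

lemma K1:
  assumes "(i, j) \<in> gens n" "set P \<subseteq> gens n" "set Q \<subseteq> gens n"
  shows "eqv n (monom (P @ [(i,j)] @ Q)) (- monom (P @ [(j,i)] @ Q))"
proof -
  have "padd (monom [(i, j)]) (monom [(j, i)]) \<in> FK_ideal n"
    using assms(1) by (intro FK_ideal.rel) (auto simp: FK_relations_def)
  then have "lmul P (rmul (padd (monom [(i, j)]) (monom [(j, i)])) Q) \<in> FK_ideal n"
    using assms by (intro I_ctx)
  moreover have "padd (monom [(i, j)]) (monom [(j, i)]) = monom [(i, j)] + monom [(j, i)]"
    by (simp add: padd_def plus_fun_def)
  ultimately show ?thesis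
    by (simp add: eqv_def lmul_add rmul_add monom_ctx)
qed

lemma K2:
  assumes "i < n" "j < n" "k < n" "l < n" "distinct [i,j,k,l]" "set P \<subseteq> gens n" "set Q \<subseteq> gens n"
  shows "eqv n (monom (P @ [(i,j),(k,l)] @ Q)) (monom (P @ [(k,l),(i,j)] @ Q))"
proof -
  have "padd (monom [(i, j), (k, l)]) (psmult (-1) (monom [(k, l), (i, j)])) \<in> FK_ideal n"
    using assms(1-5) by (intro FK_ideal.rel) (auto simp: FK_relations_def)
  moreover have "padd (monom [(i, j), (k, l)]) (psmult (-1) (monom [(k, l), (i, j)]))
      = monom [(i, j), (k, l)] - monom [(k, l), (i, j)]"
    by (auto simp: padd_def psmult_def)
  ultimately have "lmul P (rmul (monom [(i, j), (k, l)] - monom [(k, l), (i, j)]) Q) \<in> FK_ideal n"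
    using assms by (metis I_ctx)
  then show ?thesis
    by (simp add: eqv_def lmul_diff rmul_diff monom_ctx)
qed

lemma K3:
  assumes "i < n" "j < n" "k < n" "distinct [i,j,k]" "set P \<subseteq> gens n" "set Q \<subseteq> gens n"
  shows "eqv n (monom (P @ [(i,j),(j,k)] @ Q))
     (- monom (P @ [(j,k),(k,i)] @ Q) - monom (P @ [(k,i),(i,j)] @ Q))"
proof -
  have "padd (padd (monom [(i,j),(j,k)]) (monom [(j,k),(k,i)])) (monom [(k,i),(i,j)]) \<in> FK_ideal n"
  proof (rule FK_ideal.rel)
    show "padd (padd (monom [(i,j),(j,k)]) (monom [(j,k),(k,i)])) (monom [(k,i),(i,j)]) \<in> FK_relations n"
      unfolding FK_relations_def apply (rule UnI2) using assms(1-4) by blast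
  qed
  moreover have "padd (padd (monom [(i,j),(j,k)]) (monom [(j,k),(k,i)])) (monom [(k,i),(i,j)])
      = monom [(i,j),(j,k)] + monom [(j,k),(k,i)] + monom [(k,i),(i,j)]"
    by (auto simp: padd_def)
  ultimately have "lmul P (rmul (monom [(i,j),(j,k)] + monom [(j,k),(k,i)] + monom [(k,i),(i,j)]) Q) \<in> FK_ideal n"
    using assms by (metis I_ctx)
  then show ?thesis
    by (simp add: eqv_def lmul_add rmul_add monom_ctx algebra_simps)
qed


lemma eqv_comb: "eqv n X1 (- Y1) \<Longrightarrow> eqv n X2 (- Y2) \<Longrightarrow> eqv n (- X1 - X2) (Y1 + Y2)"
proof -
  assume a: "eqv n X1 (- Y1)" "eqv n X2 (- Y2)"
  have "(- X1 - X2) - (Y1 + Y2) = - (X1 - - Y1) - (X2 - - Y2)" by (simp add: algebra_simps)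
  then show ?thesis using a unfolding eqv_def by (metis I_diff I_neg)
qed

lemma gensD: "g \<in> gens n \<Longrightarrow> fst g < n \<and> snd g < n \<and> fst g \<noteq> snd g"
  by (auto simp: gens_def)

lemma K4:
  assumes "\<forall>y\<in>set A. distinct [fst y, snd y, fst b, snd b]" "b \<in> gens n"
    "set P \<subseteq> gens n" "set A \<subseteq> gens n" "set Q \<subseteq> gens n"
  shows "eqv n (monom (P @ A @ [b] @ Q)) (monom (P @ [b] @ A @ Q))"
  using assms
proof (induction A arbitrary: P)
  case Nil
  then show ?case by (simp add: eqv_refl)
next
  case (Cons y A)
  have "eqv n (monom ((P @ [y]) @ A @ [b] @ Q)) (monom ((P @ [y]) @ [b] @ A @ Q))"
    using Cons by (intro Cons.IH) auto
  moreover have "eqv n (monom ((P @ [y]) @ [b] @ A @ Q)) (monom (P @ [b] @ (y # A) @ Q))"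
    using Cons gensD[of y n] gensD[of b n] K2[of "fst y" n "snd y" "fst b" "snd b" P "A @ Q"]
    by simp
  ultimately show ?case using eqv_trans by simp
qed

lemma key_asc:
  assumes "p < n" "q < n" "r < n" "distinct [p,q,r]" "set A \<subseteq> gens n" "set B \<subseteq> gens n"
    "\<forall>y\<in>set A. distinct [fst y, snd y, q, r]" "\<forall>y\<in>set B. distinct [fst y, snd y, p, q]"
  shows "eqv n (monom (A @ [(p,q),(q,r)] @ B))
     (monom ((q,r) # A @ (p,r) # B) + monom (A @ (p,r) # B @ [(p,q)]))"
proof -
  have g: "(p,q) \<in> gens n" "(q,r) \<in> gens n" "(p,r) \<in> gens n" "(r,p) \<in> gens n"
    using assms(1-4) by (auto simp: gens_def)
  have 1: "eqv n (monom (A @ [(p,q),(q,r)] @ B))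
     (- monom (A @ [(q,r),(r,p)] @ B) - monom (A @ [(r,p),(p,q)] @ B))"
    using assms by (intro K3) auto
  have 2: "eqv n (monom (A @ [(q,r),(r,p)] @ B)) (- monom (A @ [(q,r),(p,r)] @ B))"
    using K1[of r p n "A @ [(q,r)]" B] g assms by simp
  have 3: "eqv n (monom (A @ [(r,p),(p,q)] @ B)) (- monom (A @ [(p,r),(p,q)] @ B))"
    using K1[of r p n A "(p,q) # B"] g assms by simp
  have 4: "eqv n (monom (A @ [(q,r),(p,r)] @ B)) (monom ((q,r) # A @ (p,r) # B))"
    using K4[of A "(q,r)" n "[]" "(p,r) # B"] g assms by simp
  have 5: "eqv n (monom (A @ (p,r) # B @ [(p,q)])) (monom (A @ [(p,r),(p,q)] @ B))"
    using K4[of B "(p,q)" n "A @ [(p,r)]" "[]"] g assms by simp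
  have "eqv n (- monom (A @ [(q,r),(r,p)] @ B) - monom (A @ [(r,p),(p,q)] @ B))
     (monom ((q,r) # A @ (p,r) # B) + monom (A @ (p,r) # B @ [(p,q)]))"
  proof (rule eqv_comb)
    show "eqv n (monom (A @ [(q,r),(r,p)] @ B)) (- monom ((q,r) # A @ (p,r) # B))"
      using eqv_trans[OF 2 eqv_neg[OF 4]] .
    show "eqv n (monom (A @ [(r,p),(p,q)] @ B)) (- monom (A @ (p,r) # B @ [(p,q)]))"
      using eqv_trans[OF 3 eqv_neg[OF eqv_sym[OF 5]]] .
  qed
  with 1 show ?thesis by (rule eqv_trans)
qed

lemma key_desc:
  assumes "p < n" "q < n" "r < n" "distinct [p,q,r]" "set R \<subseteq> gens n" "set T \<subseteq> gens n"
    "\<forall>y\<in>set R. distinct [fst y, snd y, p, q]" "\<forall>y\<in>set T. distinct [fst y, snd y, q, r]"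
  shows "eqv n (monom (R @ [(q,r),(p,q)] @ T))
     (monom ((p,q) # R @ (p,r) # T) + monom (R @ (p,r) # T @ [(q,r)]))"
proof -
  have g: "(p,q) \<in> gens n" "(q,r) \<in> gens n" "(p,r) \<in> gens n" "(r,p) \<in> gens n"
     "(q,p) \<in> gens n" "(r,q) \<in> gens n"
    using assms(1-4) by (auto simp: gens_def)
  have d1: "eqv n (monom (R @ [(q,r),(p,q)] @ T)) (- monom (R @ [(r,q),(p,q)] @ T))"
    using K1[of q r n R "(p,q) # T"] g assms by simp
  have d2: "eqv n (monom (R @ [(r,q),(p,q)] @ T)) (- monom (R @ [(r,q),(q,p)] @ T))"
    using K1[of p q n "R @ [(r,q)]" T] g assms by simp
  have d12: "eqv n (monom (R @ [(q,r),(p,q)] @ T)) (monom (R @ [(r,q),(q,p)] @ T))"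
    using eqv_trans[OF d1 eqv_neg[OF d2]] by simp
  have d3: "eqv n (monom (R @ [(r,q),(q,p)] @ T))
     (- monom (R @ [(q,p),(p,r)] @ T) - monom (R @ [(p,r),(r,q)] @ T))"
    using assms by (intro K3) auto
  have d4: "eqv n (monom (R @ [(q,p),(p,r)] @ T)) (- monom (R @ [(p,q),(p,r)] @ T))"
    using K1[of q p n R "(p,r) # T"] g assms by simp
  have d5: "eqv n (monom (R @ [(p,r),(r,q)] @ T)) (- monom (R @ [(p,r),(q,r)] @ T))"
    using K1[of r q n "R @ [(p,r)]" T] g assms by simp
  have d6: "eqv n (monom (R @ [(p,q),(p,r)] @ T)) (monom ((p,q) # R @ (p,r) # T))"
    using K4[of R "(p,q)" n "[]" "(p,r) # T"] g assms by simp
  have d7: "eqv n (monom (R @ (p,r) # T @ [(q,r)])) (monom (R @ [(p,r),(q,r)] @ T))"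
    using K4[of T "(q,r)" n "R @ [(p,r)]" "[]"] g assms by simp
  have "eqv n (- monom (R @ [(q,p),(p,r)] @ T) - monom (R @ [(p,r),(r,q)] @ T))
     (monom ((p,q) # R @ (p,r) # T) + monom (R @ (p,r) # T @ [(q,r)]))"
  proof (rule eqv_comb)
    show "eqv n (monom (R @ [(q,p),(p,r)] @ T)) (- monom ((p,q) # R @ (p,r) # T))"
      using eqv_trans[OF d4 eqv_neg[OF d6]] .
    show "eqv n (monom (R @ [(p,r),(r,q)] @ T)) (- monom (R @ (p,r) # T @ [(q,r)]))"
      using eqv_trans[OF d5 eqv_neg[OF eqv_sym[OF d7]]] .
  qed
  with d12 d3 show ?thesis by (blast intro: eqv_trans)
qed


lemma eqv_sum: "finite A \<Longrightarrow> (\<And>i. i \<in> A \<Longrightarrow> eqv n (f i) (g i)) \<Longrightarrow> eqv n (sum f A) (sum g A)"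
  unfolding eqv_def by (simp add: sum_subtractf[symmetric] I_sum)

lemma eqv_mem: "eqv n f g \<Longrightarrow> g \<in> FK_ideal n \<Longrightarrow> f \<in> FK_ideal n"
  unfolding eqv_def using I_add by fastforce

lemma step_gen:
  assumes Y: "Y \<in> FK_ideal n" and u: "set u \<subseteq> gens n" "set u' \<subseteq> gens n"
    and Yeq: "Y = (\<Sum>i<(k::nat). monom (W i)) + monom V"
    and Seq: "S = (\<Sum>i<k. monom (T i)) + monom (u @ V) + monom (V @ u')"
    and key: "\<And>i. i < k \<Longrightarrow> eqv n (monom (T i)) (monom (u @ W i) + monom (W i @ u'))"
  shows "S \<in> FK_ideal n"
proof -
  have m: "lmul u Y + rmul Y u' \<in> FK_ideal n"
    using Y u by (intro I_add FK_ideal.lmul FK_ideal.rmul)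
  have e: "lmul u Y + rmul Y u' = (\<Sum>i<k. monom (u @ W i) + monom (W i @ u')) + monom (u @ V) + monom (V @ u')"
    unfolding Yeq by (simp add: lmul_add rmul_add lmul_sum[OF finite_lessThan] rmul_sum[OF finite_lessThan] lmul_monom rmul_monom sum.distrib algebra_simps)
  have "eqv n S (lmul u Y + rmul Y u')"
    unfolding Seq e
    by (intro eqv_add eqv_refl eqv_sum) (auto intro: key)
  then show ?thesis using m by (rule eqv_mem)
qed

fun pe :: "nat list \<Rightarrow> gen list" where
  "pe (a # b # r) = (a, b) # pe (b # r)"
| "pe _ = []"

definition cyc :: "nat list \<Rightarrow> gen list" where
  "cyc vs = pe vs @ [(last vs, hd vs)]"

definition Sa :: "gen list \<Rightarrow> ncpoly" where
  "Sa es = (\<Sum>i<length es. monom (drop (Suc i) es @ take i es))"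

definition Sd :: "gen list \<Rightarrow> ncpoly" where
  "Sd es = (\<Sum>i<length es. monom (rev (drop (Suc i) es @ take i es)))"

lemma pe_snoc: "ws \<noteq> [] \<Longrightarrow> pe (ws @ [x]) = pe ws @ [(last ws, x)]"
  by (induction ws rule: pe.induct) auto

lemma pe_length: "length (pe vs) = length vs - 1"
  by (induction vs rule: pe.induct) auto

lemma pe_set: "y \<in> set (pe vs) \<Longrightarrow> fst y \<in> set vs \<and> snd y \<in> set vs"
  by (induction vs rule: pe.induct) auto

lemma pe_set_dist: "distinct vs \<Longrightarrow> y \<in> set (pe vs) \<Longrightarrow> fst y \<noteq> snd y"
  by (induction vs rule: pe.induct) auto

lemma pe_drop: "drop k (pe ws) = pe (drop k ws)"
  by (induction ws arbitrary: k rule: pe.induct) (auto simp: drop_Cons' split: nat.splits)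

lemma pe_take: "take i (pe ws) = pe (take (Suc i) ws)"
  by (induction ws arbitrary: i rule: pe.induct) (auto simp: take_Cons' split: nat.splits)

lemma pe_nth: "Suc j < length vs \<Longrightarrow> pe vs ! j = (vs ! j, vs ! Suc j)"
  by (induction vs arbitrary: j rule: pe.induct) (auto simp: nth_Cons' split: nat.splits)

lemma pe_gens: "distinct vs \<Longrightarrow> set vs \<subseteq> {..<n} \<Longrightarrow> set (pe vs) \<subseteq> gens n"
  using pe_set pe_set_dist unfolding gens_def by fastforce

lemma Sa_split2: "Sa (F @ [a, b]) =
   (\<Sum>i<length F. monom (drop (Suc i) F @ [a, b] @ take i F)) + monom ([b] @ F) + monom (F @ [a])"
  unfolding Sa_def by (simp add: sum.lessThan_Suc)

lemma Sa_split1: "Sa (F @ [c]) =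
   (\<Sum>i<length F. monom (drop (Suc i) F @ [c] @ take i F)) + monom F"
  unfolding Sa_def by (simp add: sum.lessThan_Suc)

lemma Sd_split2: "Sd (F @ [a, b]) =
   (\<Sum>i<length F. monom (rev (drop (Suc i) F @ [a, b] @ take i F))) + monom ([a] @ rev F) + monom (rev F @ [b])"
  unfolding Sd_def by (simp add: sum.lessThan_Suc algebra_simps)

lemma Sd_split1: "Sd (F @ [c]) =
   (\<Sum>i<length F. monom (rev (drop (Suc i) F @ [c] @ take i F))) + monom (rev F)"
  unfolding Sd_def by (simp add: sum.lessThan_Suc)


lemma hd_notin_drop: "distinct ws \<Longrightarrow> ws \<noteq> [] \<Longrightarrow> hd ws \<notin> set (drop (Suc i) ws)"
  by (cases ws) (auto dest: in_set_dropD)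

lemma last_notin_take: "distinct ws \<Longrightarrow> Suc i < length ws \<Longrightarrow> last ws \<notin> set (take (Suc i) ws)"
proof
  assume d: "distinct ws" and l: "Suc i < length ws" and m: "last ws \<in> set (take (Suc i) ws)"
  have ne: "drop (Suc i) ws \<noteq> []" using l by simp
  have "last ws = last (drop (Suc i) ws)" using ne
    by (metis append_take_drop_id last_appendR)
  then have "last ws \<in> set (drop (Suc i) ws)" using last_in_set[OF ne] by metis
  moreover have "set (take (Suc i) ws) \<inter> set (drop (Suc i) ws) = {}"
    using d by (metis append_take_drop_id distinct_append)
  ultimately show False using m by blast
qed

lemma cycle:
  fixes vs :: "nat list"
  assumes "2 \<le> length vs" "distinct vs" "set vs \<subseteq> {..<n}"
  shows "Sa (cyc vs) \<in> FK_ideal n \<and> Sd (cyc vs) \<in> FK_ideal n"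
  using assms
proof (induction vs rule: rev_induct)
  case Nil then show ?case by simp
next
  case (snoc x ws)
  show ?case
  proof (cases "length ws = 1")
    case True
    then obtain u where ws: "ws = [u]" by (cases ws) auto
    have ux: "u \<noteq> x" "u < n" "x < n" using snoc.prems ws by auto
    have c: "cyc (ws @ [x]) = [(u,x),(x,u)]" by (simp add: ws cyc_def)
    have m: "monom [(u,x)] + monom [(x,u)] \<in> FK_ideal n"
      using K1[of u x n "[]" "[]"] ux by (simp add: eqv_def gens_def)
    have "Sa (cyc (ws @ [x])) = monom [(u,x)] + monom [(x,u)]"
      unfolding c Sa_def by (simp add: numeral_2_eq_2 sum.lessThan_Suc add.commute)
    moreover have "Sd (cyc (ws @ [x])) = monom [(u,x)] + monom [(x,u)]"
      unfolding c Sd_def by (simp add: numeral_2_eq_2 sum.lessThan_Suc add.commute)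
    ultimately show ?thesis using m by metis
  next
    case False
    hence len: "2 \<le> length ws" using snoc.prems by simp
    have dws: "distinct ws" "x \<notin> set ws" "set ws \<subseteq> {..<n}" "x < n" using snoc.prems by auto
    have IH: "Sa (cyc ws) \<in> FK_ideal n \<and> Sd (cyc ws) \<in> FK_ideal n" using snoc.IH len dws by blast
    define F where "F = pe ws"
    define l where "l = last ws"
    define h where "h = hd ws"
    have ws_ne: "ws \<noteq> []" using len by auto
    have cx: "cyc (ws @ [x]) = F @ [(l,x),(x,h)]"
      using ws_ne by (simp add: cyc_def pe_snoc F_def l_def h_def)
    have cw: "cyc ws = F @ [(l,h)]" by (simp add: cyc_def F_def l_def h_def)
    have lh: "l \<noteq> h"
    proof -
      define t where "t = tl ws"
      have t: "ws = h # t" "t \<noteq> []" using len ws_ne unfolding h_def t_def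
        by (simp_all, metis One_nat_def Suc_1 Suc_le_length_iff le_numeral_extra(4) length_Cons list.collapse list.size(3) not_less_eq_eq)
      then have "l \<in> set t" using l_def by simp
      then show ?thesis using dws t by auto
    qed
    have ln: "l < n" "h < n" using dws(3) last_in_set[OF ws_ne] hd_in_set[OF ws_ne] l_def h_def by auto
    have Fg: "set F \<subseteq> gens n" using pe_gens dws F_def by blast
    have lens: "length F = length ws - 1" by (simp add: F_def pe_length)
    have dist3: "distinct [l, x, h]" using lh dws ws_ne l_def h_def by auto
    have condA: "\<forall>y\<in>set (drop (Suc i) F). distinct [fst y, snd y, x, h]" for i
    proof
      fix y assume y: "y \<in> set (drop (Suc i) F)"
      then have y': "y \<in> set (pe (drop (Suc i) ws))" by (simp add: F_def pe_drop)
      have dd: "distinct (drop (Suc i) ws)" using dws by simp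
      have "fst y \<in> set (drop (Suc i) ws)" "snd y \<in> set (drop (Suc i) ws)" "fst y \<noteq> snd y"
        using pe_set[OF y'] pe_set_dist[OF dd y'] by auto
      moreover have "h \<notin> set (drop (Suc i) ws)" using hd_notin_drop dws ws_ne h_def by blast
      moreover have "x \<notin> set (drop (Suc i) ws)" using dws by (meson in_set_dropD)
      ultimately show "distinct [fst y, snd y, x, h]" using dws(2) dist3 by auto
    qed
    have condB: "\<forall>y\<in>set (take i F). distinct [fst y, snd y, l, x]" if i: "i < length F" for i
    proof
      fix y assume y: "y \<in> set (take i F)"
      then have y': "y \<in> set (pe (take (Suc i) ws))" by (simp add: F_def pe_take)
      have dd: "distinct (take (Suc i) ws)" using dws by simp
      have "fst y \<in> set (take (Suc i) ws)" "snd y \<in> set (take (Suc i) ws)" "fst y \<noteq> snd y"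
        using pe_set[OF y'] pe_set_dist[OF dd y'] by auto
      moreover have "l \<notin> set (take (Suc i) ws)" unfolding l_def
        using last_notin_take[OF dws(1), of i] i lens by simp
      moreover have "x \<notin> set (take (Suc i) ws)" using dws by (meson in_set_takeD)
      ultimately show "distinct [fst y, snd y, l, x]" using dist3 by auto
    qed
    have gA: "set (drop (Suc i) F) \<subseteq> gens n" "set (take i F) \<subseteq> gens n" for i
      using Fg by (meson order_trans set_drop_subset set_take_subset)+
    have gab: "set [(x,h)] \<subseteq> gens n" "set [(l,x)] \<subseteq> gens n"
      using dist3 ln dws by (auto simp: gens_def)
    have asc: "Sa (cyc (ws @ [x])) \<in> FK_ideal n"
    proof (rule step_gen[where u = "[(x,h)]" and u' = "[(l,x)]" and k = "length F"
          and W = "\<lambda>i. drop (Suc i) F @ [(l,h)] @ take i F" and V = F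
          and T = "\<lambda>i. drop (Suc i) F @ [(l,x),(x,h)] @ take i F"])
      show "Sa (cyc ws) \<in> FK_ideal n" using IH by blast
      show "Sa (cyc ws) = (\<Sum>i<length F. monom (drop (Suc i) F @ [(l,h)] @ take i F)) + monom F"
        unfolding cw by (rule Sa_split1)
      show "Sa (cyc (ws @ [x])) = (\<Sum>i<length F. monom (drop (Suc i) F @ [(l,x),(x,h)] @ take i F))
          + monom ([(x,h)] @ F) + monom (F @ [(l,x)])"
        unfolding cx by (rule Sa_split2)
      fix i assume i: "i < length F"
      show "eqv n (monom (drop (Suc i) F @ [(l,x),(x,h)] @ take i F))
         (monom ([(x,h)] @ (drop (Suc i) F @ [(l,h)] @ take i F)) + monom ((drop (Suc i) F @ [(l,h)] @ take i F) @ [(l,x)]))"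
        using key_asc[of l n x h "drop (Suc i) F" "take i F"] ln dws dist3 gA condA condB[OF i]
        by simp
    qed (use gab in auto)
    have desc: "Sd (cyc (ws @ [x])) \<in> FK_ideal n"
    proof (rule step_gen[where u = "[(l,x)]" and u' = "[(x,h)]" and k = "length F"
          and W = "\<lambda>i. rev (drop (Suc i) F @ [(l,h)] @ take i F)" and V = "rev F"
          and T = "\<lambda>i. rev (drop (Suc i) F @ [(l,x),(x,h)] @ take i F)"])
      show "Sd (cyc ws) \<in> FK_ideal n" using IH by blast
      show "Sd (cyc ws) = (\<Sum>i<length F. monom (rev (drop (Suc i) F @ [(l,h)] @ take i F))) + monom (rev F)"
        unfolding cw by (rule Sd_split1)
      show "Sd (cyc (ws @ [x])) = (\<Sum>i<length F. monom (rev (drop (Suc i) F @ [(l,x),(x,h)] @ take i F)))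
          + monom ([(l,x)] @ rev F) + monom (rev F @ [(x,h)])"
        unfolding cx by (rule Sd_split2)
      fix i assume i: "i < length F"
      have gr: "set (rev (take i F)) \<subseteq> gens n" "set (rev (drop (Suc i) F)) \<subseteq> gens n"
        using gA by auto
      show "eqv n (monom (rev (drop (Suc i) F @ [(l,x),(x,h)] @ take i F)))
         (monom ([(l,x)] @ rev (drop (Suc i) F @ [(l,h)] @ take i F)) + monom (rev (drop (Suc i) F @ [(l,h)] @ take i F) @ [(x,h)]))"
        using key_desc[of l n x h "rev (take i F)" "rev (drop (Suc i) F)"] ln dws dist3 gr condA condB[OF i]
        by simp
    qed (use gab in auto)
    show ?thesis using asc desc by blast
  qed
qed


lemma cyc_upt_length: "0 < n \<Longrightarrow> length (cyc [0..<n]) = n"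
  by (simp add: cyc_def pe_length)

lemma cyc_upt_nth: "j < n \<Longrightarrow> cyc [0..<n] ! j = edge n j"
proof (cases "Suc j < n")
  case True
  then have jl: "j < length (pe [0..<n])" by (simp add: pe_length)
  show ?thesis using True
    by (simp add: cyc_def nth_append jl pe_nth edge_def)
next
  case False
  assume j: "j < n"
  then have jn: "j = n - 1" using False by simp
  show ?thesis using j jn
    by (simp add: cyc_def nth_append pe_length edge_def last_upt)
qed

lemma Rn1_word_eq:
  assumes "3 \<le> n" "i < n"
  shows "Rn1_word n i = drop (Suc i) (cyc [0..<n]) @ take i (cyc [0..<n])"
proof (rule nth_equalityI)
  show "length (Rn1_word n i) = length (drop (Suc i) (cyc [0..<n]) @ take i (cyc [0..<n]))"
    using assms by (simp add: Rn1_word_def cyc_upt_length)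
  fix k assume k: "k < length (Rn1_word n i)"
  then have k': "k < n - 1" by (simp add: Rn1_word_def)
  show "Rn1_word n i ! k = (drop (Suc i) (cyc [0..<n]) @ take i (cyc [0..<n])) ! k"
  proof (cases "k < n - Suc i")
    case True
    then show ?thesis using assms k'
      by (simp add: Rn1_word_def nth_append cyc_upt_length cyc_upt_nth add.commute)
  next
    case False
    have e: "edge n (Suc (i + k)) = edge n (Suc (k + i) - n)"
    proof -
      have eq: "Suc (i + k) = (Suc (k + i) - n) + n" using False assms by simp
      have "edge n (Suc (i + k)) = edge n ((Suc (k + i) - n) + n)" by (simp only: eq)
      also have "\<dots> = edge n (Suc (k + i) - n)" by (simp add: edge_def) (metis add_Suc mod_add_self2)
      finally show ?thesis .
    qed
    show ?thesis using assms k' False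
      by (simp add: Rn1_word_def nth_append cyc_upt_length cyc_upt_nth e)
  qed
qed

lemma R1_word_eq: "R1_word n i = rev (Rn1_word n i)"
proof (rule nth_equalityI)
  show "length (R1_word n i) = length (rev (Rn1_word n i))"
    by (simp add: R1_word_def Rn1_word_def)
  fix k assume "k < length (R1_word n i)"
  then have k: "k < n - 1" by (simp add: R1_word_def)
  have a: "[0..<n - Suc 0] ! (n - Suc (Suc k)) = n - Suc (Suc k)" using k by simp
  have b: "Suc (i + (n - Suc (Suc k))) = i + n - Suc k" using k by arith
  show "R1_word n i ! k = rev (Rn1_word n i) ! k"
    using k apply (simp add: R1_word_def Rn1_word_def rev_nth)
    apply (subst a)
    apply (subst b)
    apply (rule refl)
    done
qed

theorem mainTheorem20:
  fixes n :: nat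
  assumes "n \<ge> 3"
  shows "FK_zero n (R1 n) \<and> FK_zero n (Rn1 n)"
proof -
  have c: "Sa (cyc [0..<n]) \<in> FK_ideal n \<and> Sd (cyc [0..<n]) \<in> FK_ideal n"
    using assms by (intro cycle) auto
  have l: "length (cyc [0..<n]) = n" using assms by (simp add: cyc_upt_length)
  have "Rn1 n = Sa (cyc [0..<n])"
  proof
    fix v show "Rn1 n v = Sa (cyc [0..<n]) v"
      unfolding Rn1_def Sa_def l using assms
      by (simp add: sum_fun_apply Rn1_word_eq)
  qed
  moreover have "R1 n = Sd (cyc [0..<n])"
  proof
    fix v show "R1 n v = Sd (cyc [0..<n]) v"
      unfolding R1_def Sd_def l using assms
      by (simp add: sum_fun_apply Rn1_word_eq R1_word_eq)
  qed
  ultimately show ?thesis using c by (simp add: FK_zero_def)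
qed

end
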